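(* Let $X,Y$ be real Hilbert spaces, $f:X\to\mathbb{R}$ convex and continuously differentiable, $A:X\to Y$ linear and continuous, $b\in Y$, and assume $S\times M\neq\emptyset$. Let $\varepsilon:[t_{0},+\infty[\ \to\ ]0,+\infty[$ be continuously differentiable with $\lim_{t\to+\infty}\varepsilon(t)=0$, and for each $t\geq t_0$ let $(x_t,\lambda_t)$ be the unique saddle point of $L_t$. Suppose that there exists $\alpha>0$ such that $\|T(x,\lambda)-T(\xi,\eta)\|^{2}\geq\alpha\|(x,\lambda)-(\xi,\eta)\|^{2}$ for all $(x,\lambda),(\xi,\eta)\in X\times Y$. Then, for $(\bar x,\bar\lambda)\in S\times M$, as $t\to+\infty$: \[ \|(x_t,\lambda_t)\|^2=\mathcal{O}\Big(\frac{1}{\alpha+\varepsilon^2(t)}\Big),\qquad \|(x_t,\lambda_t)-(\bar x,\bar\lambda)\|^2=\mathcal{O}\Big(\frac{\varepsilon^2(t)}{\alpha+\varepsilon^2(t)}\Big),\qquad \|(\dot x_t,\dot\lambda_t)\|^2=\mathcal{O}\bigg(\frac{|\dot\varepsilon(t)|^2}{(\alpha+\varepsilon^2(t))^2}\bigg), \] the last estimate holding along the (almost every) $t$ at which $t\mapsto(x_t,\lambda_t)$ is differentiable.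
   Context: $X\times Y$ carries the product inner product $\langle(x,\lambda),(\xi,\eta)\rangle=\langle x,\xi\rangle_X+\langle \lambda,\eta\rangle_Y$ and associated norm $\|\cdot\|$. The Lagrangian is $L(x,\lambda)=f(x)+\langle\lambda,Ax-b\rangle_Y$. $S$ is the set of optimal solutions of $\min\{f(x):Ax=b\}$ and $M\subset Y$ the set of associated Lagrange multipliers; $S\times M$ is exactly the set of saddle points of $L$, equivalently the zero set of the monotone operator $T:X\times Y\to X\times Y$, $T(x,\lambda)=(\nabla f(x)+A^*\lambda,\ b-Ax)$. For $t\ge t_0$, $L_t(x,\lambda)=L(x,\lambda)+\frac{\varepsilon(t)}{2}(\|x\|_X^2-\|\lambda\|_Y^2)$ has a unique saddle point $(x_t,\lambda_t)$, characterized by $T(x_t,\lambda_t)+\varepsilon(t)(x_t,\lambda_t)=0$. The map $t\mapsto(x_t,\lambda_t)$ is Lipschitz on compact intervals, hence differentiable a.e.; $(\dot x_t,\dot\lambda_t)$ denotes its derivative. *)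

theory Defs
  imports "HOL-Analysis.Analysis" "HOL-Library.Landau_Symbols"
begin

definition lagr :: "('a::real_inner \<Rightarrow> real) \<Rightarrow> ('a \<Rightarrow> 'b::real_inner) \<Rightarrow> 'b \<Rightarrow> 'a \<Rightarrow> 'b \<Rightarrow> real" where
  "lagr f A b x l = f x + inner l (A x - b)"

definition lagr_reg :: "('a::real_inner \<Rightarrow> real) \<Rightarrow> ('a \<Rightarrow> 'b::real_inner) \<Rightarrow> 'b \<Rightarrow> real \<Rightarrow> 'a \<Rightarrow> 'b \<Rightarrow> real" where
  "lagr_reg f A b e x l = lagr f A b x l + e / 2 * ((norm x)\<^sup>2 - (norm l)\<^sup>2)"

definition saddle_point :: "('a \<Rightarrow> 'b \<Rightarrow> real) \<Rightarrow> 'a \<times> 'b \<Rightarrow> bool" where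
  "saddle_point F p \<longleftrightarrow> (\<forall>x l. F (fst p) l \<le> F (fst p) (snd p) \<and> F (fst p) (snd p) \<le> F x (snd p))"

definition opT :: "('a::real_inner \<Rightarrow> 'a) \<Rightarrow> ('a \<Rightarrow> 'b::real_inner) \<Rightarrow> ('b \<Rightarrow> 'a) \<Rightarrow> 'b \<Rightarrow> 'a \<times> 'b \<Rightarrow> 'a \<times> 'b" where
  "opT gf A As b p = (gf (fst p) + As (snd p), b - A (fst p))"

end

theory Submission
  imports Defs
begin

lemma vd_quot:
  fixes f :: "real \<Rightarrow> 'a::real_normed_vector"
  assumes "(f has_vector_derivative D) (at x within S)"
  shows "((\<lambda>y. (f y - f x) /\<^sub>R (y - x)) \<longlongrightarrow> D) (at x within S)"
proof -
  have "((\<lambda>y. norm (f y - f x - (y - x) *\<^sub>R D) / norm (y - x)) \<longlongrightarrow> 0) (at x within S)"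
    using assms unfolding has_vector_derivative_def has_derivative_iff_norm by simp
  moreover have "eventually (\<lambda>y. norm (f y - f x - (y - x) *\<^sub>R D) / norm (y - x) = norm ((f y - f x) /\<^sub>R (y - x) - D)) (at x within S)"
    unfolding eventually_at_filter
  proof (rule always_eventually, intro allI impI)
   fix y assume that: "y \<noteq> x" show "norm (f y - f x - (y - x) *\<^sub>R D) / norm (y - x) = norm ((f y - f x) /\<^sub>R (y - x) - D)"
  proof -
    have "f y - f x - (y - x) *\<^sub>R D = (y - x) *\<^sub>R ((f y - f x) /\<^sub>R (y - x) - D)"
      using that by (simp add: scaleR_right_diff_distrib)
    then show ?thesis using that by simp
  qed
  qed
  ultimately have "((\<lambda>y. norm ((f y - f x) /\<^sub>R (y - x) - D)) \<longlongrightarrow> 0) (at x within S)"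
    by (rule Lim_transform_eventually)
  then show ?thesis
    using tendsto_norm_zero_iff LIM_zero_iff by blast
qed

lemma deriv_ineq:
  fixes p :: "real \<Rightarrow> 'a::real_normed_vector" and g :: "real \<Rightarrow> 'a"
  assumes "(p has_vector_derivative v) (at t)" "(g has_vector_derivative w) (at t)"
    and ev: "\<forall>\<^sub>F s in at t. alpha * (norm (p s - p t))\<^sup>2 \<le> (norm (g s - g t))\<^sup>2"
  shows "alpha * (norm v)\<^sup>2 \<le> (norm w)\<^sup>2"
proof -
  have 1: "((\<lambda>s. alpha * (norm ((p s - p t) /\<^sub>R (s - t)))\<^sup>2) \<longlongrightarrow> alpha * (norm v)\<^sup>2) (at t)"
    using vd_quot[OF assms(1)] by (intro tendsto_intros)
  have 2: "((\<lambda>s. (norm ((g s - g t) /\<^sub>R (s - t)))\<^sup>2) \<longlongrightarrow> (norm w)\<^sup>2) (at t)"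
    using vd_quot[OF assms(2)] by (intro tendsto_intros)
  have 3: "\<forall>\<^sub>F s in at t. alpha * (norm ((p s - p t) /\<^sub>R (s - t)))\<^sup>2 \<le> (norm ((g s - g t) /\<^sub>R (s - t)))\<^sup>2"
    using ev unfolding eventually_at_filter
  proof (rule eventually_mono)
    fix s assume h: "s \<noteq> t \<longrightarrow> s \<in> UNIV \<longrightarrow> alpha * (norm (p s - p t))\<^sup>2 \<le> (norm (g s - g t))\<^sup>2"
    show "s \<noteq> t \<longrightarrow> s \<in> UNIV \<longrightarrow> alpha * (norm ((p s - p t) /\<^sub>R (s - t)))\<^sup>2 \<le> (norm ((g s - g t) /\<^sub>R (s - t)))\<^sup>2"
    proof (intro impI)
      assume "s \<noteq> t"
      then have "(s - t)\<^sup>2 > 0" by simp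
      have "alpha * (norm ((p s - p t) /\<^sub>R (s - t)))\<^sup>2 = alpha * (norm (p s - p t))\<^sup>2 / (s - t)\<^sup>2"
        by (simp add: power_mult_distrib power_inverse divide_inverse)
      also have "\<dots> \<le> (norm (g s - g t))\<^sup>2 / (s - t)\<^sup>2"
        using h \<open>s \<noteq> t\<close> \<open>(s - t)\<^sup>2 > 0\<close> by (simp add: divide_right_mono)
      also have "\<dots> = (norm ((g s - g t) /\<^sub>R (s - t)))\<^sup>2"
        by (simp add: power_mult_distrib power_inverse divide_inverse)
      finally show "alpha * (norm ((p s - p t) /\<^sub>R (s - t)))\<^sup>2 \<le> (norm ((g s - g t) /\<^sub>R (s - t)))\<^sup>2" .
    qed
  qed
  show ?thesis
    by (rule tendsto_le[OF _ 2 1 3]) simp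
qed

lemma foc:
  fixes f :: "'a::real_inner \<Rightarrow> real" and A :: "'a \<Rightarrow> 'b::real_inner"
  assumes f_grad: "\<And>x. (f has_derivative (\<lambda>h. inner (gf x) h)) (at x)"
    and A_lin: "bounded_linear A"
    and As_adj: "\<And>x y. inner (A x) y = inner x (As y)"
    and sp: "saddle_point (lagr_reg f A b e) (x, l)"
  shows "gf x + As l + e *\<^sub>R x = 0" "A x - b - e *\<^sub>R l = 0"
proof -
  interpret A: bounded_linear A by fact
  have min: "\<forall>y\<in>UNIV. lagr_reg f A b e x l \<le> lagr_reg f A b e y l"
    and max: "\<forall>m\<in>UNIV. lagr_reg f A b e x m \<le> lagr_reg f A b e x l"
    using sp unfolding saddle_point_def by auto
  have eq1: "(\<lambda>y. lagr_reg f A b e y l) = (\<lambda>y. f y + inner l (A y - b) + e / 2 * (inner y y - (norm l)\<^sup>2))"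
    by (simp add: lagr_reg_def lagr_def power2_norm_eq_inner)
  have d1: "((\<lambda>y. lagr_reg f A b e y l) has_derivative
      (\<lambda>h. inner (gf x) h + inner l (A h) + e / 2 * (inner h x + inner x h))) (at x)"
    unfolding eq1
    by (intro derivative_eq_intros) (auto intro: f_grad[unfolded] bounded_linear_imp_has_derivative A_lin)
  have "(\<lambda>h. inner (gf x) h + inner l (A h) + e / 2 * (inner h x + inner x h)) = (\<lambda>v. 0)"
    by (rule differential_zero_maxmin[OF _ open_UNIV d1]) (use min in auto)
  then have "inner (gf x) G + inner l (A G) + e / 2 * (inner G x + inner x G) = 0" for G
    by metis
  moreover have "inner (gf x) G + inner l (A G) + e / 2 * (inner G x + inner x G) = inner (gf x + As l + e *\<^sub>R x) G" for G
    using As_adj[of G l] by (simp add: inner_add_left inner_add_right inner_commute)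
  ultimately have "inner (gf x + As l + e *\<^sub>R x) (gf x + As l + e *\<^sub>R x) = 0" by metis
  then show "gf x + As l + e *\<^sub>R x = 0" by simp
  have eq2: "(\<lambda>m. lagr_reg f A b e x m) = (\<lambda>m. f x + inner m (A x - b) + e / 2 * ((norm x)\<^sup>2 - inner m m))"
    by (simp add: lagr_reg_def lagr_def power2_norm_eq_inner)
  have d2: "((\<lambda>m. lagr_reg f A b e x m) has_derivative
      (\<lambda>h. inner h (A x - b) + e / 2 * (0 - (inner h l + inner l h)))) (at l)"
    unfolding eq2
    by (intro derivative_eq_intros) auto
  have "(\<lambda>h. inner h (A x - b) + e / 2 * (0 - (inner h l + inner l h))) = (\<lambda>v. 0)"
    by (rule differential_zero_maxmin[OF _ open_UNIV d2]) (use max in auto)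
  then have "inner G (A x - b) + e / 2 * (0 - (inner G l + inner l G)) = 0" for G
    by metis
  moreover have "inner G (A x - b) + e / 2 * (0 - (inner G l + inner l G)) = inner (A x - b - e *\<^sub>R l) G" for G
    by (simp add: inner_diff_left inner_commute algebra_simps)
  ultimately have "inner (A x - b - e *\<^sub>R l) (A x - b - e *\<^sub>R l) = 0" by metis
  then show "A x - b - e *\<^sub>R l = 0" by simp
qed

lemma r1:
  fixes a e2 D P Z :: real
  assumes "a > 0" "e2 \<ge> 0" "e2 < a / 4" "a * D \<le> e2 * P" "P \<le> 2 * D + 2 * Z" "D \<ge> 0" "Z \<ge> 0"
  shows "D \<le> 8 * Z * (e2 / (a + e2))" "P \<le> 4 * Z" "P \<le> 8 * a * Z * (1 / (a + e2))"
proof -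
  have "a * D \<le> 2 * e2 * D + 2 * e2 * Z"
    using assms(4) mult_left_mono[OF assms(5) assms(2)] by (simp add: algebra_simps)
  moreover have "2 * e2 * D \<le> a / 2 * D" using assms by (intro mult_right_mono) auto
  ultimately have "a / 2 * D \<le> 2 * e2 * Z" by linarith
  then have D: "a * D \<le> 4 * e2 * Z" by linarith
  have "4 * e2 * Z \<le> a * Z" using assms by (intro mult_right_mono) auto
  with D have "a * D \<le> a * Z" by linarith
  then have "D \<le> Z" using assms(1) by simp
  then show P4: "P \<le> 4 * Z" using assms by linarith
  have ae: "a + e2 > 0" "a + e2 \<le> 2 * a" using assms by auto
  have "D * (a + e2) \<le> D * (2 * a)" using ae assms by (intro mult_left_mono) auto
  also have "\<dots> \<le> 8 * Z * e2" using D by (simp add: algebra_simps)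
  finally show "D \<le> 8 * Z * (e2 / (a + e2))" using ae by (simp add: field_simps)
  have "4 * Z * (a + e2) \<le> 4 * Z * (2 * a)" using ae assms by (intro mult_left_mono) auto
  moreover have "P * (a + e2) \<le> 4 * Z * (a + e2)" using mult_right_mono[OF P4, of "a + e2"] ae by simp
  ultimately have "P * (a + e2) \<le> 8 * a * Z" by (simp add: algebra_simps)
  then show "P \<le> 8 * a * Z * (1 / (a + e2))" using ae by (simp add: field_simps)
qed

lemma r3:
  fixes a e2 d2 V W P Z :: real
  assumes "a > 0" "e2 \<ge> 0" "e2 < a / 4" "a * V \<le> W" "W \<le> 2 * d2 * P + 2 * e2 * V" "P \<le> 4 * Z"
    "V \<ge> 0" "d2 \<ge> 0" "Z \<ge> 0"
  shows "V \<le> 64 * a * Z * (d2 / (a + e2)\<^sup>2)"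
proof -
  have "2 * d2 * P \<le> 2 * d2 * (4 * Z)" using assms by (intro mult_left_mono) auto
  moreover have "2 * e2 * V \<le> a / 2 * V" using assms by (intro mult_right_mono) auto
  ultimately have "a * V \<le> 16 * d2 * Z" using assms by linarith
  have ae: "a + e2 > 0" "a + e2 \<le> 2 * a" using assms by auto
  have sq: "(a + e2)\<^sup>2 \<le> 4 * a\<^sup>2"
    using power_mono[OF ae(2), of 2] ae by (simp add: power_mult_distrib)
  have "a * (V * (a + e2)\<^sup>2) \<le> a * (V * (4 * a\<^sup>2))"
    using sq assms by (intro mult_left_mono) auto
  also have "\<dots> = (a * V) * (4 * a\<^sup>2)" by (simp add: algebra_simps)
  also have "\<dots> \<le> (16 * d2 * Z) * (4 * a\<^sup>2)"
    using \<open>a * V \<le> 16 * d2 * Z\<close> by (intro mult_right_mono) auto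
  also have "\<dots> = a * (64 * a * Z * d2)" by (simp add: algebra_simps power2_eq_square)
  finally have "V * (a + e2)\<^sup>2 \<le> 64 * a * Z * d2" using assms(1) by simp
  then show ?thesis using ae by (simp add: field_simps)
qed

lemma norm_add_sq:
  fixes a b :: "'a::real_normed_vector"
  shows "(norm (a + b))\<^sup>2 \<le> 2 * (norm a)\<^sup>2 + 2 * (norm b)\<^sup>2"
proof -
  have "norm (a + b) \<le> norm a + norm b" by (rule norm_triangle_ineq)
  then have "(norm (a + b))\<^sup>2 \<le> (norm a + norm b)\<^sup>2" by (simp add: power_mono)
  also have "\<dots> \<le> 2 * (norm a)\<^sup>2 + 2 * (norm b)\<^sup>2"
    using sum_squares_ge_zero[of "norm a - norm b" 0] by (simp add: power2_eq_square algebra_simps)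
  finally show ?thesis .
qed

theorem lemma2p7:
  fixes f :: "'a::{real_inner,complete_space} \<Rightarrow> real"
    and gf :: "'a \<Rightarrow> 'a"
    and A :: "'a \<Rightarrow> 'b::{real_inner,complete_space}"
    and As :: "'b \<Rightarrow> 'a"
    and b :: 'b
    and eps eps' :: "real \<Rightarrow> real"
    and t0 alpha :: real
    and z :: "real \<Rightarrow> 'a \<times> 'b"
    and xbar :: 'a and lbar :: 'b
  assumes f_convex: "convex_on UNIV f"
    and f_grad: "\<And>x. (f has_derivative (\<lambda>h. inner (gf x) h)) (at x)"
    and gf_cont: "continuous_on UNIV gf"
    and A_lin: "bounded_linear A"
    and As_adj: "\<And>x y. inner (A x) y = inner x (As y)"
    and SM_nonempty: "\<exists>p. saddle_point (lagr f A b) p"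
    and eps_pos: "\<And>t. t \<ge> t0 \<Longrightarrow> eps t > 0"
    and eps_deriv: "\<And>t. t \<ge> t0 \<Longrightarrow> (eps has_real_derivative eps' t) (at t within {t0..})"
    and eps'_cont: "continuous_on {t0..} eps'"
    and eps_lim: "(eps \<longlongrightarrow> 0) at_top"
    and z_saddle: "\<And>t. t \<ge> t0 \<Longrightarrow> saddle_point (lagr_reg f A b (eps t)) (z t)"
    and alpha_pos: "alpha > 0"
    and T_strong: "\<And>p q. (norm (opT gf A As b p - opT gf A As b q))\<^sup>2 \<ge> alpha * (norm (p - q))\<^sup>2"
    and sol: "saddle_point (lagr f A b) (xbar, lbar)"
  shows "(\<lambda>t. (norm (z t))\<^sup>2) \<in> O[at_top](\<lambda>t. 1 / (alpha + (eps t)\<^sup>2)) \<and>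
    (\<lambda>t. (norm (z t - (xbar, lbar)))\<^sup>2) \<in> O[at_top](\<lambda>t. (eps t)\<^sup>2 / (alpha + (eps t)\<^sup>2)) \<and>
    (\<exists>C. \<forall>\<^sub>F t in at_top. \<forall>v. (z has_vector_derivative v) (at t) \<longrightarrow>
           (norm v)\<^sup>2 \<le> C * (\<bar>eps' t\<bar>\<^sup>2 / (alpha + (eps t)\<^sup>2)\<^sup>2))"
proof -
  define zb where "zb = (xbar, lbar)"
  define Z where "Z = (norm zb)\<^sup>2"
  have Z0: "Z \<ge> 0" by (simp add: Z_def)
  have lag0: "lagr f A b = lagr_reg f A b 0" by (intro ext) (simp add: lagr_reg_def)
  have Tzb: "opT gf A As b zb = 0"
    using foc[OF f_grad A_lin As_adj, of b 0 xbar lbar] sol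
    unfolding lag0 zb_def opT_def by (simp add: zero_prod_def)
  have Tz: "opT gf A As b (z t) = - (eps t *\<^sub>R z t)" if "t \<ge> t0" for t
  proof -
    obtain x l where zt: "z t = (x, l)" by fastforce
    have "gf x + As l + eps t *\<^sub>R x = 0" "A x - b - eps t *\<^sub>R l = 0"
      using foc[OF f_grad A_lin As_adj, of b "eps t" x l] z_saddle[OF that] zt by auto
    then have "gf x + As l = - (eps t *\<^sub>R x)" "b - A x = - (eps t *\<^sub>R l)"
      by (simp_all add: algebra_simps eq_neg_iff_add_eq_0)
    then show ?thesis using zt by (simp add: opT_def)
  qed
  have keyA: "alpha * (norm (z t - zb))\<^sup>2 \<le> (eps t)\<^sup>2 * (norm (z t))\<^sup>2" if "t \<ge> t0" for t
    using T_strong[of "z t" zb] Tz[OF that] Tzb by (simp add: power_mult_distrib)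
  have keyB: "alpha * (norm (z s - z t))\<^sup>2 \<le> (norm (eps s *\<^sub>R z s - eps t *\<^sub>R z t))\<^sup>2"
    if "t \<ge> t0" "s \<ge> t0" for s t
  proof -
    have "opT gf A As b (z s) - opT gf A As b (z t) = - (eps s *\<^sub>R z s - eps t *\<^sub>R z t)"
      using Tz[OF that(1)] Tz[OF that(2)] by simp
    then show ?thesis using T_strong[of "z s" "z t"] by (metis norm_minus_cancel)
  qed
  have PD: "(norm (z t))\<^sup>2 \<le> 2 * (norm (z t - zb))\<^sup>2 + 2 * Z" for t
    using norm_add_sq[of "z t - zb" zb] by (simp add: Z_def)
  have ev1: "\<forall>\<^sub>F t in at_top. t > t0" by (rule eventually_gt_at_top)
  have lim2: "((\<lambda>t. (eps t)\<^sup>2) \<longlongrightarrow> 0) at_top"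
    using tendsto_power[OF eps_lim, of 2] by simp
  have ev2: "\<forall>\<^sub>F t in at_top. (eps t)\<^sup>2 < alpha / 4"
    using order_tendstoD(2)[OF lim2, of "alpha / 4"] alpha_pos by simp
  have main: "(norm (z t - zb))\<^sup>2 \<le> 8 * Z * ((eps t)\<^sup>2 / (alpha + (eps t)\<^sup>2)) \<and>
     (norm (z t))\<^sup>2 \<le> 4 * Z \<and> (norm (z t))\<^sup>2 \<le> 8 * alpha * Z * (1 / (alpha + (eps t)\<^sup>2))"
    if "t > t0" "(eps t)\<^sup>2 < alpha / 4" for t
    using r1[OF alpha_pos _ that(2) keyA[of t] PD[of t] _ Z0] that by auto
  have c1: "(\<lambda>t. (norm (z t))\<^sup>2) \<in> O[at_top](\<lambda>t. 1 / (alpha + (eps t)\<^sup>2))"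
  proof (rule bigoI[where c = "8 * alpha * Z"])
    show "\<forall>\<^sub>F t in at_top. norm ((norm (z t))\<^sup>2) \<le> 8 * alpha * Z * norm (1 / (alpha + (eps t)\<^sup>2))"
      using ev1 ev2
    proof eventually_elim
      case (elim t)
      have "alpha + (eps t)\<^sup>2 > 0" using alpha_pos by (simp add: add_pos_nonneg)
      then show ?case using main[OF elim] by simp
    qed
  qed
  have c2: "(\<lambda>t. (norm (z t - (xbar, lbar)))\<^sup>2) \<in> O[at_top](\<lambda>t. (eps t)\<^sup>2 / (alpha + (eps t)\<^sup>2))"
  proof (rule bigoI[where c = "8 * Z"])
    show "\<forall>\<^sub>F t in at_top. norm ((norm (z t - (xbar, lbar)))\<^sup>2) \<le> 8 * Z * norm ((eps t)\<^sup>2 / (alpha + (eps t)\<^sup>2))"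
      using ev1 ev2
    proof eventually_elim
      case (elim t)
      have "alpha + (eps t)\<^sup>2 > 0" using alpha_pos by (simp add: add_pos_nonneg)
      then show ?case using main[OF elim] by (simp add: zb_def)
    qed
  qed
  have c3: "\<forall>\<^sub>F t in at_top. \<forall>v. (z has_vector_derivative v) (at t) \<longrightarrow>
           (norm v)\<^sup>2 \<le> 64 * alpha * Z * (\<bar>eps' t\<bar>\<^sup>2 / (alpha + (eps t)\<^sup>2)\<^sup>2)"
    using ev1 ev2
  proof eventually_elim
    case (elim t)
    show ?case
    proof (intro allI impI)
      fix v assume zd: "(z has_vector_derivative v) (at t)"
      have "(eps has_real_derivative eps' t) (at t within {t0<..})"
        using eps_deriv[of t] elim by (rule_tac DERIV_subset) auto
      then have ed: "(eps has_real_derivative eps' t) (at t)"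
        using at_within_open[of t "{t0<..}"] elim by auto
      have gd: "((\<lambda>s. eps s *\<^sub>R z s) has_vector_derivative (eps t *\<^sub>R v + eps' t *\<^sub>R z t)) (at t)"
        by (rule has_vector_derivative_scaleR[OF ed zd])
      have evs: "\<forall>\<^sub>F s in at t. s > t0"
        using eventually_at_in_open'[of "{t0<..}" t] elim by auto
      have "\<forall>\<^sub>F s in at t. alpha * (norm (z s - z t))\<^sup>2 \<le> (norm (eps s *\<^sub>R z s - eps t *\<^sub>R z t))\<^sup>2"
        using evs by eventually_elim (use keyB elim in auto)
      then have "alpha * (norm v)\<^sup>2 \<le> (norm (eps t *\<^sub>R v + eps' t *\<^sub>R z t))\<^sup>2"
        by (rule deriv_ineq[OF zd gd])
      moreover have "(norm (eps t *\<^sub>R v + eps' t *\<^sub>R z t))\<^sup>2 \<le>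
          2 * (eps' t)\<^sup>2 * (norm (z t))\<^sup>2 + 2 * (eps t)\<^sup>2 * (norm v)\<^sup>2"
        using norm_add_sq[of "eps t *\<^sub>R v" "eps' t *\<^sub>R z t"] by (simp add: power_mult_distrib)
      ultimately have "(norm v)\<^sup>2 \<le> 64 * alpha * Z * ((eps' t)\<^sup>2 / (alpha + (eps t)\<^sup>2)\<^sup>2)"
        using r3[OF alpha_pos _ elim(2), of "(norm v)\<^sup>2" _ "(eps' t)\<^sup>2" "(norm (z t))\<^sup>2" Z] main[OF elim] Z0
        by auto
      then show "(norm v)\<^sup>2 \<le> 64 * alpha * Z * (\<bar>eps' t\<bar>\<^sup>2 / (alpha + (eps t)\<^sup>2)\<^sup>2)" by simp
    qed
  qed
  show ?thesis using c1 c2 c3 by blast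
qed

end
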